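(* Let $f\in C^1[0,1]$ with $f(0)=0$, $h:=f'$, and $q$ satisfying (q). Then $$c^*\ge\max\Big\{\sup_{\varphi\in(0,1]}\frac{f(\varphi)}{\varphi},\ h(0)+2\sqrt{\liminf_{\varphi\to0^+}\frac{q(\varphi)}{\varphi}}\Big\}.$$
   Context: Condition (q): $q\in C[0,1]$, $q>0$ on $(0,1)$, $q(0)=q(1)=0$, and $\limsup_{\varphi\to0^+}q(\varphi)/\varphi<+\infty$. $c^*$ denotes the real number such that there exists $z\in C[0,1]\cap C^1(0,1)$ with $\dot z=h-c-q/z$ and $z<0$ on $(0,1)$, and $z(0)=z(1)=0$, if and only if $c\ge c^*$ (such $z$ then being unique). *)

theory Defs
  imports "HOL-Analysis.Analysis"
begin

definition cond_q :: "(real \<Rightarrow> real) \<Rightarrow> bool" where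
  "cond_q q \<longleftrightarrow> continuous_on {0..1} q \<and> (\<forall>\<phi>\<in>{0<..<1}. q \<phi> > 0) \<and>
     q 0 = 0 \<and> q 1 = 0 \<and>
     Limsup (at_right 0) (\<lambda>\<phi>. ereal (q \<phi> / \<phi>)) < \<infinity>"

text \<open>The boundary value problem: there is z in C[0,1] and C^1(0,1) with
  z' = h - c - q/z, z < 0 on (0,1), z(0) = z(1) = 0.  (Since the right-hand side is
  continuous on (0,1), differentiability with this derivative gives C^1(0,1).)\<close>
definition has_front_solution :: "(real \<Rightarrow> real) \<Rightarrow> (real \<Rightarrow> real) \<Rightarrow> real \<Rightarrow> bool" where
  "has_front_solution h q c \<longleftrightarrow> (\<exists>z :: real \<Rightarrow> real.
     continuous_on {0..1} z \<and>
     (\<forall>\<phi>\<in>{0<..<1}. (z has_real_derivative (h \<phi> - c - q \<phi> / z \<phi>)) (at \<phi>)) \<and>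
     continuous_on {0<..<1} (deriv z) \<and>
     (\<forall>\<phi>\<in>{0<..<1}. z \<phi> < 0) \<and> z 0 = 0 \<and> z 1 = 0)"

end

theory Submission
  imports Defs
begin

lemma mvt_le:
  fixes s :: "real \<Rightarrow> real"
  assumes t: "0 \<le> t" and cont: "continuous_on {0..t} s"
    and der: "\<And>x. 0 < x \<Longrightarrow> x < t \<Longrightarrow> \<exists>D. (s has_real_derivative D) (at x) \<and> D \<le> K"
  shows "s t \<le> s 0 + K * t"
proof -
  let ?g = "\<lambda>x. s x - K * x"
  have "?g 0 \<ge> ?g t"
  proof (rule DERIV_nonpos_imp_decreasing_open[OF t])
    fix x assume "0 < x" "x < t"
    then obtain D where D: "(s has_real_derivative D) (at x)" "D \<le> K" using der by blast
    have "(?g has_real_derivative D - K) (at x)"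
      by (auto intro!: derivative_eq_intros D(1))
    then show "\<exists>y. DERIV ?g x :> y \<and> y \<le> 0" using D(2) by (intro exI[of _ "D - K"]) auto
  next
    show "continuous_on {0..t} ?g" by (intro continuous_intros cont)
  qed
  then show ?thesis by simp
qed

lemma core:
  fixes s :: "real \<Rightarrow> real" and a b \<delta> :: real
  assumes d: "\<delta> > 0" and b: "b \<ge> 0" and cont: "continuous_on {0..\<delta>} s" and s0: "s 0 = 0"
    and pos: "\<forall>x\<in>{0<..<\<delta>}. s x > 0"
    and der: "\<forall>x\<in>{0<..<\<delta>}. \<exists>D. (s has_real_derivative D) (at x) \<and> D \<le> a - b * x / s x"
  shows "2 * sqrt b \<le> a"
proof -
  have bound: "s t \<le> (a - b / k) * t"
    if k: "k > 0" and sk: "\<forall>x\<in>{0<..<\<delta>}. s x \<le> k * x" and t: "0 < t" "t < \<delta>" for k t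
  proof -
    have "s t \<le> s 0 + (a - b / k) * t"
    proof (rule mvt_le)
      show "0 \<le> t" using t by simp
      show "continuous_on {0..t} s" using t by (intro continuous_on_subset[OF cont]) auto
      fix x assume x: "0 < x" "x < t"
      then have xi: "x \<in> {0<..<\<delta>}" using t by auto
      then obtain D where D: "(s has_real_derivative D) (at x)" "D \<le> a - b * x / s x" using der by blast
      have sx: "s x > 0" "s x \<le> k * x" using pos sk xi by auto
      have "b / k \<le> b * x / s x"
        proof -
        have "b * s x \<le> b * (k * x)" using sx b by (intro mult_left_mono) auto
        then show ?thesis using sx k b x by (simp add: divide_simps algebra_simps)
      qed
      then show "\<exists>D. (s has_real_derivative D) (at x) \<and> D \<le> a - b / k" using D by auto
    qed
    then show ?thesis using s0 by simp
  qed
  have sa: "\<forall>x\<in>{0<..<\<delta>}. s x \<le> a * x"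
  proof
    fix t assume t: "t \<in> {0<..<\<delta>}"
    have "s t \<le> s 0 + a * t"
    proof (rule mvt_le)
      show "0 \<le> t" using t by simp
      show "continuous_on {0..t} s" using t by (intro continuous_on_subset[OF cont]) auto
      fix x assume x: "0 < x" "x < t"
      then have xi: "x \<in> {0<..<\<delta>}" using t by auto
      then obtain D where D: "(s has_real_derivative D) (at x)" "D \<le> a - b * x / s x" using der by blast
      have "s x > 0" using pos xi by auto
      then have "0 \<le> b * x / s x" using xi b by auto
      then show "\<exists>D. (s has_real_derivative D) (at x) \<and> D \<le> a" using D by auto
    qed
    then show "s t \<le> a * t" using s0 by simp
  qed
  define h where "h = \<delta> / 2"
  have h: "h \<in> {0<..<\<delta>}" using d by (auto simp: h_def)
  have "0 < a * h" using sa h pos by (meson less_le_trans)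
  then have a: "a > 0" using h by (simp add: zero_less_mult_iff)
  show ?thesis
  proof (rule ccontr)
    assume "\<not> 2 * sqrt b \<le> a"
    then have "a < 2 * sqrt b" by simp
    then have "a^2 < (2 * sqrt b)^2" using a by (intro power_strict_mono) auto
    then have ab: "a^2 < 4 * b" using b by (simp add: power_mult_distrib)
    define m where "m = b - a^2 / 4"
    have m: "m > 0" using ab by (simp add: m_def)
    have ind: "\<forall>x\<in>{0<..<\<delta>}. s x \<le> (a - real n * m / a) * x" for n
    proof (induction n)
      case 0 then show ?case using sa by simp
    next
      case (Suc n)
      define k where "k = a - real n * m / a"
      have sk: "\<forall>x\<in>{0<..<\<delta>}. s x \<le> k * x" using Suc k_def by simp
      have "0 < k * h" using sk h pos by (meson less_le_trans)
      then have k: "k > 0" using h by (simp add: zero_less_mult_iff)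
      have ka: "k \<le> a" using m a by (simp add: k_def)
      have "k^2 - a*k + b = (k - a/2)^2 + m" by (simp add: m_def power2_eq_square algebra_simps)
      also have "\<dots> \<ge> m" by simp
      finally have e1: "k^2 - a*k + b \<ge> m" .
      have "m * k / a \<le> m" using ka a m k by (simp add: divide_simps mult_left_mono)
      then have "k^2 - a*k + b - m * k / a \<ge> 0" using e1 by simp
      then have "a - b / k \<le> k - m / a" using k a
        by (simp add: divide_simps power2_eq_square algebra_simps)
      then have le: "a - b / k \<le> a - real (Suc n) * m / a"
        by (simp add: k_def algebra_simps add_divide_distrib)
      show ?case
      proof
        fix x assume x: "x \<in> {0<..<\<delta>}"
        have "s x \<le> (a - b / k) * x" using bound[OF k sk] x by auto
        also have "\<dots> \<le> (a - real (Suc n) * m / a) * x" using le x by (intro mult_right_mono) auto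
        finally show "s x \<le> (a - real (Suc n) * m / a) * x" .
      qed
    qed
    obtain n :: nat where n: "a * a / m < real n" using reals_Archimedean2 by blast
    have "a < real n * m / a" using n m a by (simp add: divide_simps mult.commute)
    then have "(a - real n * m / a) * h < 0" using h by (simp add: mult_neg_pos)
    moreover have "s h \<le> (a - real n * m / a) * h" using ind h by blast
    ultimately show False using pos h by force
  qed
qed

theorem corollary5p4:
  fixes f h q :: "real \<Rightarrow> real" and cstar :: real
  assumes f_deriv: "\<forall>x\<in>{0..1}. (f has_real_derivative h x) (at x within {0..1})"
    and h_cont: "continuous_on {0..1} h"
    and f0: "f 0 = 0"
    and q: "cond_q q"
    and cstar: "\<forall>c. has_front_solution h q c \<longleftrightarrow> c \<ge> cstar"
  shows "cstar \<ge> max (SUP \<phi>\<in>{0<..1}. f \<phi> / \<phi>)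
                  (h 0 + 2 * sqrt (real_of_ereal (Liminf (at_right 0) (\<lambda>\<phi>. ereal (q \<phi> / \<phi>)))))"
proof -
  define c where "c = cstar"
  have "has_front_solution h q c" using cstar by (simp add: c_def)
  then obtain z where zc: "continuous_on {0..1} z"
    and zd: "\<forall>\<phi>\<in>{0<..<1}. (z has_real_derivative (h \<phi> - c - q \<phi> / z \<phi>)) (at \<phi>)"
    and zneg: "\<forall>\<phi>\<in>{0<..<1}. z \<phi> < 0" and z0: "z 0 = 0" and z1: "z 1 = 0"
    unfolding has_front_solution_def by (elim exE conjE) simp
  have qpos: "\<forall>\<phi>\<in>{0<..<1}. q \<phi> > 0" using q by (simp add: cond_q_def)
  have fd: "(f has_real_derivative h x) (at x)" if "x \<in> {0<..<1}" for x
  proof -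
    have x1: "x \<in> {0..1}" using that by auto
    have "(f has_real_derivative h x) (at x within {0<..<1})"
      by (rule DERIV_subset[OF bspec[OF f_deriv x1]]) auto
    moreover have "at x within {0<..<1} = at x"
      by (rule at_within_open[OF that]) simp
    ultimately show ?thesis by simp
  qed
  have fc: "continuous_on {0..1} f"
    by (rule DERIV_continuous_on[of _ _ h]) (rule bspec[OF f_deriv])
  have p1: "f \<phi> / \<phi> \<le> c" if phi: "\<phi> \<in> {0<..1}" for \<phi>
  proof -
    let ?g = "\<lambda>x. z x - f x + c * x"
    have "?g 0 \<le> ?g \<phi>"
    proof (rule DERIV_nonneg_imp_increasing_open[of 0 \<phi> ?g])
      show "0 \<le> \<phi>" using phi by simp
      fix x assume x: "0 < x" "x < \<phi>"
      then have xi: "x \<in> {0<..<1}" using phi by auto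
      have "(?g has_real_derivative (h x - c - q x / z x) - h x + c) (at x)"
        using zd xi fd[OF xi] by (auto intro!: derivative_eq_intros)
      moreover have "(h x - c - q x / z x) - h x + c \<ge> 0"
        using qpos zneg xi by (simp add: divide_pos_neg less_imp_le)
      ultimately show "\<exists>y. DERIV ?g x :> y \<and> y \<ge> 0" by blast
    next
      show "continuous_on {0..\<phi>} ?g" using phi
        by (intro continuous_intros continuous_on_subset[OF zc] continuous_on_subset[OF fc]) auto
    qed
    then have "f \<phi> \<le> z \<phi> + c * \<phi>" using z0 f0 by simp
    moreover have "z \<phi> \<le> 0"
    proof (cases "\<phi> = 1")
      case True then show ?thesis using z1 by simp
    next
      case False then show ?thesis using zneg phi by (auto intro: less_imp_le)
    qed
    ultimately show ?thesis using phi by (simp add: divide_simps)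
  qed
  have P1: "(SUP \<phi>\<in>{0<..1}. f \<phi> / \<phi>) \<le> c"
    by (rule cSUP_least) (use p1 in auto)
  have key: "2 * sqrt b \<le> c - h 0 + e"
    if b: "b \<ge> 0" and e: "e > 0" and dq: "\<exists>\<delta>>0. \<forall>\<phi>\<in>{0<..<\<delta>}. b * \<phi> \<le> q \<phi>" for b e
  proof -
    obtain \<delta> where d: "\<delta> > 0" and dq: "\<forall>\<phi>\<in>{0<..<\<delta>}. b * \<phi> \<le> q \<phi>" using dq by blast
    obtain d where dd: "d > 0" and dh: "\<forall>x'\<in>{0..1}. dist x' 0 < d \<longrightarrow> dist (h x') (h 0) < e"
      proof -
      have "0 \<in> {0..(1::real)}" by simp
      with h_cont have "\<forall>e>0. \<exists>d>0. \<forall>x'\<in>{0..1}. dist x' 0 < d \<longrightarrow> dist (h x') (h 0) < e"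
        unfolding continuous_on_iff by (rule bspec)
      then obtain d where "d > 0" "\<forall>x'\<in>{0..1}. dist x' 0 < d \<longrightarrow> dist (h x') (h 0) < e"
        using e by auto
      then show ?thesis by (rule that)
    qed
    define D where "D = min \<delta> (min d 1)"
    have D: "D > 0" "D \<le> \<delta>" "D \<le> d" "D \<le> 1" using d dd by (auto simp: D_def)
    show ?thesis
    proof (rule core[where s = "\<lambda>x. - z x" and \<delta> = D])
      show "0 < D" using D by simp
      show "0 \<le> b" using b .
      show "continuous_on {0..D} (\<lambda>x. - z x)" using D
        by (intro continuous_intros continuous_on_subset[OF zc]) auto
      show "- z 0 = 0" using z0 by simp
      show "\<forall>x\<in>{0<..<D}. 0 < - z x" using zneg D by auto
      show "\<forall>x\<in>{0<..<D}. \<exists>Dv. ((\<lambda>x. - z x) has_real_derivative Dv) (at x) \<and>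
              Dv \<le> c - h 0 + e - b * x / - z x"
      proof
        fix x assume x: "x \<in> {0<..<D}"
        then have xi: "x \<in> {0<..<1}" using D by auto
        have zx: "z x < 0" using zneg xi by auto
        have "((\<lambda>x. - z x) has_real_derivative - (h x - c - q x / z x)) (at x)"
          using zd xi by (auto intro!: derivative_eq_intros)
        moreover have "- (h x - c - q x / z x) \<le> c - h 0 + e - b * x / - z x"
        proof -
          have "dist (h x) (h 0) < e" using dh x D by (auto simp: dist_real_def)
          then have "h x > h 0 - e" by (simp add: dist_real_def abs_less_iff)
          moreover have "b * x \<le> q x" using dq x D by auto
          then have "q x / z x \<le> b * x / z x" using zx by (simp add: divide_right_mono_neg)
          ultimately show ?thesis by simp
        qed
        ultimately show "\<exists>Dv. ((\<lambda>x. - z x) has_real_derivative Dv) (at x) \<and>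
              Dv \<le> c - h 0 + e - b * x / - z x" by blast
      qed
    qed
  qed
  have hc: "h 0 \<le> c"
  proof (rule field_le_epsilon)
    fix e :: real assume e: "e > 0"
    have "\<exists>\<delta>>0. \<forall>\<phi>\<in>{0<..<\<delta>}. 0 * \<phi> \<le> q \<phi>"
      using qpos by (intro exI[of _ 1]) (auto intro: less_imp_le)
    from key[OF order_refl e this] show "h 0 \<le> c + e" by simp
  qed
  define Li where "Li = Liminf (at_right 0) (\<lambda>\<phi>. ereal (q \<phi> / \<phi>))"
  define L where "L = real_of_ereal Li"
  have P2: "h 0 + 2 * sqrt L \<le> c"
  proof (cases "L > 0")
    case False
    then have "sqrt L \<le> 0" by simp
    then show ?thesis using hc by linarith
  next
    case True
    then have LiL: "Li = ereal L" unfolding L_def by (cases Li) auto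
    have bl: "b \<le> ((c - h 0) / 2)^2" if b: "0 < b" "b < L" for b
    proof -
      have "ereal b < Li" using LiL b by simp
      then have "eventually (\<lambda>\<phi>. ereal b < ereal (q \<phi> / \<phi>)) (at_right 0)"
        unfolding Li_def by (rule less_LiminfD)
      then obtain d where d: "d > 0" and dP: "\<forall>y>0. y < d \<longrightarrow> b < q y / y"
        unfolding eventually_at_right_field by auto
      have ex: "\<exists>\<delta>>0. \<forall>\<phi>\<in>{0<..<\<delta>}. b * \<phi> \<le> q \<phi>"
        using d dP by (intro exI[of _ d]) (auto simp: divide_simps less_imp_le)
      have "2 * sqrt b \<le> c - h 0"
        by (rule field_le_epsilon) (use key[OF less_imp_le[OF b(1)] _ ex] in auto)
      then have "sqrt b \<le> (c - h 0) / 2" by simp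
      then have "(sqrt b)^2 \<le> ((c - h 0) / 2)^2" using b by (intro power_mono) auto
      then show ?thesis using b by simp
    qed
    have "L \<le> ((c - h 0) / 2)^2"
      by (rule dense_le_bounded[OF True]) (use bl in auto)
    then have "sqrt L \<le> sqrt (((c - h 0) / 2)^2)" by (rule real_sqrt_le_mono)
    also have "\<dots> = (c - h 0) / 2" using hc by simp
    finally have "sqrt L \<le> (c - h 0) / 2" .
    then show ?thesis by simp
  qed
  show ?thesis using P1 P2 unfolding c_def L_def Li_def by simp
qed

end
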